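(* Let $K,G,\eta,\bar\eta,\xi,c_0>0$ and let $H:\mathbb R_+\to\mathbb R_+$ be nondecreasing, strongly semismooth, with $H(0)=0$. For $\boldsymbol\sigma\in\mathbb R^{3\times3}_{sym}$ and $\kappa\ge0$ let $f(\boldsymbol\sigma,\kappa)=\hat f(p(\boldsymbol\sigma),\varrho(\boldsymbol\sigma),\kappa)=\sqrt{\tfrac12}\,\varrho(\boldsymbol\sigma)+\eta\, p(\boldsymbol\sigma)-\xi(c_0+\kappa)$. Let a trial stress $\boldsymbol\sigma^{tr}\in\mathbb R^{3\times3}_{sym}$ and $\bar\varepsilon^{p,tr}\ge0$ be given, with $p^{tr}=p(\boldsymbol\sigma^{tr})$, $\mathbf s^{tr}=\mathbf s(\boldsymbol\sigma^{tr})$, $\varrho^{tr}=\|\mathbf s^{tr}\|$, $\mathbf n^{tr}=\mathbf s^{tr}/\varrho^{tr}$, and assume $f(\boldsymbol\sigma^{tr},H(\bar\varepsilon^{p,tr}))>0$. Consider the problem (P): find $\boldsymbol\sigma\in\mathbb R^{3\times3}_{sym}$, $\bar\varepsilon^p$, $\triangle\lambda$ such that $$\boldsymbol\sigma=\boldsymbol\sigma^{tr}-\triangle\lambda\big(G\sqrt2\,\hat{\mathbf n}+K\bar\eta\mathbf I\big)\ \text{for some }\hat{\mathbf n}\in\partial\varrho(\boldsymbol\sigma),\quad \bar\varepsilon^p=\bar\varepsilon^{p,tr}+\triangle\lambda\xi,\quad f(\boldsymbol\sigma,H(\bar\varepsilon^p))=0.$$ If $(\boldsymbol\sigma,\bar\varepsilon^p,\triangle\lambda)$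 solves (P) and $p=p(\boldsymbol\sigma)$, $\varrho=\varrho(\boldsymbol\sigma)$, then $(p,\varrho,\bar\varepsilon^p,\triangle\lambda)$ solves the system (R): $$p=p^{tr}-\triangle\lambda K\bar\eta,\quad \varrho=(\varrho^{tr}-\triangle\lambda G\sqrt2)^+,\quad \bar\varepsilon^p=\bar\varepsilon^{p,tr}+\triangle\lambda\xi,\quad \hat f(p,\varrho,H(\bar\varepsilon^p))=0.$$ Conversely, if $(p,\varrho,\bar\varepsilon^p,\triangle\lambda)$ solves (R), then $(\boldsymbol\sigma,\bar\varepsilon^p,\triangle\lambda)$ solves (P), where $\boldsymbol\sigma=\boldsymbol\sigma^{tr}-\triangle\lambda(G\sqrt2\,\mathbf n^{tr}+K\bar\eta\mathbf I)$ if $\varrho^{tr}>\triangle\lambda G\sqrt2$ and $\boldsymbol\sigma=(p^{tr}-\triangle\lambda K\bar\eta)\mathbf I$ if $\varrho^{tr}\le\triangle\lambda G\sqrt2$.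
   Context: $\mathbb R^{3\times3}_{sym}$: real symmetric $3\times3$ matrices with Frobenius product ":" and norm; $\mathbf I$ identity; $p(\boldsymbol\sigma)=\frac13\mathbf I:\boldsymbol\sigma$, $\mathbf s(\boldsymbol\sigma)=\boldsymbol\sigma-p(\boldsymbol\sigma)\mathbf I$, $\varrho(\boldsymbol\sigma)=\|\mathbf s(\boldsymbol\sigma)\|$; $(x)^+=\max\{0,x\}$. The subdifferential of $\varrho$ is $\partial\varrho(\boldsymbol\sigma)=\{\mathbf s(\boldsymbol\sigma)/\varrho(\boldsymbol\sigma)\}$ if $\varrho(\boldsymbol\sigma)>0$ and $\partial\varrho(\boldsymbol\sigma)=\{\hat{\mathbf n}\in\mathbb R^{3\times3}_{sym}:\mathbf I:\hat{\mathbf n}=0,\ \|\hat{\mathbf n}\|\le1\}$ if $\varrho(\boldsymbol\sigma)=0$. A function is strongly semismooth if it is locally Lipschitz, directionally differentiable, and $F(x+h)-F(x)-Vh=O(\|h\|^2)$ for all $V$ in the Clarke generalized Jacobian $\partial F(x+h)$ as $h\to0$. *)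

theory Defs
  imports "HOL-Analysis.Analysis"
begin

type_synonym mat3 = "real^3^3"

definition sym3 :: "mat3 \<Rightarrow> bool" where
  "sym3 A \<longleftrightarrow> transpose A = A"

definition frob :: "mat3 \<Rightarrow> mat3 \<Rightarrow> real" (infixl ":\<^sub>F" 70) where
  "frob A B = (\<Sum>i\<in>UNIV. \<Sum>j\<in>UNIV. A$i$j * B$i$j)"

definition fnorm :: "mat3 \<Rightarrow> real" where
  "fnorm A = sqrt (frob A A)"

definition Id3 :: mat3 where "Id3 = mat 1"

definition pr :: "mat3 \<Rightarrow> real" where
  "pr \<sigma> = frob Id3 \<sigma> / 3"

definition dev :: "mat3 \<Rightarrow> mat3" where
  "dev \<sigma> = \<sigma> - pr \<sigma> *\<^sub>R Id3"

definition rho :: "mat3 \<Rightarrow> real" where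
  "rho \<sigma> = fnorm (dev \<sigma>)"

definition subdiff_rho :: "mat3 \<Rightarrow> mat3 set" where
  "subdiff_rho \<sigma> =
     (if rho \<sigma> > 0 then {(1 / rho \<sigma>) *\<^sub>R dev \<sigma>}
      else {n. sym3 n \<and> frob Id3 n = 0 \<and> fnorm n \<le> 1})"

definition pos_part :: "real \<Rightarrow> real" where
  "pos_part x = max 0 x"

definition fhat :: "real \<Rightarrow> real \<Rightarrow> real \<Rightarrow> real \<Rightarrow> real \<Rightarrow> real \<Rightarrow> real" where
  "fhat \<eta> \<xi> c0 p \<rho> \<kappa> = sqrt (1/2) * \<rho> + \<eta> * p - \<xi> * (c0 + \<kappa>)"

definition fyield :: "real \<Rightarrow> real \<Rightarrow> real \<Rightarrow> mat3 \<Rightarrow> real \<Rightarrow> real" where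
  "fyield \<eta> \<xi> c0 \<sigma> \<kappa> = fhat \<eta> \<xi> c0 (pr \<sigma>) (rho \<sigma>) \<kappa>"

definition clarke_jac :: "real set \<Rightarrow> (real \<Rightarrow> real) \<Rightarrow> real \<Rightarrow> real set" where
  "clarke_jac S F x = convex hull {v. \<exists>xs ds. (\<forall>k. xs k \<in> interior S \<and>
       (F has_real_derivative ds k) (at (xs k))) \<and> xs \<longlonglongrightarrow> x \<and> ds \<longlonglongrightarrow> v}"

definition strongly_semismooth_on :: "real set \<Rightarrow> (real \<Rightarrow> real) \<Rightarrow> bool" where
  "strongly_semismooth_on S F \<longleftrightarrow>
     (\<forall>x\<in>S. \<exists>e>0. \<exists>L. \<forall>y\<in>S. \<forall>z\<in>S. \<bar>y - x\<bar> < e \<and> \<bar>z - x\<bar> < e \<longrightarrow>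
         \<bar>F y - F z\<bar> \<le> L * \<bar>y - z\<bar>) \<and>
     (\<forall>x\<in>S. \<forall>h. (\<forall>\<^sub>F t in at_right 0. x + t * h \<in> S) \<longrightarrow>
         (\<exists>d. ((\<lambda>t. (F (x + t * h) - F x) / t) \<longlongrightarrow> d) (at_right 0))) \<and>
     (\<forall>x\<in>S. \<exists>C e. e > 0 \<and> (\<forall>h. \<bar>h\<bar> < e \<and> x + h \<in> S \<longrightarrow>
         (\<forall>V\<in>clarke_jac S F (x + h). \<bar>F (x + h) - F x - V * h\<bar> \<le> C * h\<^sup>2)))"

end

theory Submission
  imports Defs
begin


lemma frob_inner: "frob A B = inner A B"
  unfolding frob_def inner_vec_def by (simp add: inner_real_def)
lemma fnorm_norm: "fnorm A = norm A"
  unfolding fnorm_def frob_inner by (simp add: norm_eq_sqrt_inner)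
lemma II0: "frob Id3 Id3 = 3"
  unfolding frob_def Id3_def mat_def by (simp add: if_distrib cong: if_cong)
lemma II: "inner Id3 Id3 = 3" using II0 by (simp add: frob_inner)
lemma pr_lin: "pr (a - b) = pr a - pr b" "pr (a + b) = pr a + pr b" "pr (c *\<^sub>R a) = c * pr a" "pr Id3 = 1"
  unfolding pr_def frob_inner by (auto simp: inner_diff_right inner_add_right II)
lemma dev_lin: "dev (a - b) = dev a - dev b" "dev (a + b) = dev a + dev b" "dev (c *\<^sub>R a) = c *\<^sub>R dev a" "dev Id3 = 0"
  unfolding dev_def by (auto simp: pr_lin algebra_simps)
lemma pr_dev: "pr (dev a) = 0" unfolding dev_def by (simp add: pr_lin)
lemma dev_tr0: "pr n = 0 \<Longrightarrow> dev n = n" unfolding dev_def by simp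
lemma sym_ops: "sym3 a \<Longrightarrow> sym3 b \<Longrightarrow> sym3 (a - b)" "sym3 a \<Longrightarrow> sym3 b \<Longrightarrow> sym3 (a + b)"
  "sym3 a \<Longrightarrow> sym3 (c *\<^sub>R a)" "sym3 Id3"
  unfolding sym3_def Id3_def by (auto simp: transpose_def vec_eq_iff mat_def)
lemma sym_dev: "sym3 a \<Longrightarrow> sym3 (dev a)" unfolding dev_def by (simp add: sym_ops)
lemma dev_dev: "dev (dev a) = dev a" by (rule dev_tr0[OF pr_dev])
lemma rho_nn: "rho a \<ge> 0" unfolding rho_def fnorm_norm by simp

theorem theorem2:
  fixes K G \<eta> \<eta>b \<xi> c0 :: real and H :: "real \<Rightarrow> real"
    and \<sigma>tr :: mat3 and eptr :: real
  assumes "K > 0" "G > 0" "\<eta> > 0" "\<eta>b > 0" "\<xi> > 0" "c0 > 0"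
    and "\<forall>x\<ge>0. H x \<ge> 0" "mono_on {0..} H" "strongly_semismooth_on {0..} H" "H 0 = 0"
    and "sym3 \<sigma>tr" "eptr \<ge> 0"
    and "fyield \<eta> \<xi> c0 \<sigma>tr (H eptr) > 0"
  shows
    "(\<forall>\<sigma> ep dl. dl \<ge> 0 \<and> sym3 \<sigma> \<and>
        (\<exists>n\<in>subdiff_rho \<sigma>. \<sigma> = \<sigma>tr - dl *\<^sub>R ((G * sqrt 2) *\<^sub>R n + (K * \<eta>b) *\<^sub>R Id3)) \<and>
        ep = eptr + dl * \<xi> \<and> fyield \<eta> \<xi> c0 \<sigma> (H ep) = 0
      \<longrightarrow> pr \<sigma> = pr \<sigma>tr - dl * K * \<eta>b \<and>
          rho \<sigma> = pos_part (rho \<sigma>tr - dl * G * sqrt 2) \<and>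
          ep = eptr + dl * \<xi> \<and> fhat \<eta> \<xi> c0 (pr \<sigma>) (rho \<sigma>) (H ep) = 0)
   \<and>
    (\<forall>p r ep dl. dl \<ge> 0 \<and> p = pr \<sigma>tr - dl * K * \<eta>b \<and>
        r = pos_part (rho \<sigma>tr - dl * G * sqrt 2) \<and>
        ep = eptr + dl * \<xi> \<and> fhat \<eta> \<xi> c0 p r (H ep) = 0
      \<longrightarrow> (let \<sigma> = (if rho \<sigma>tr > dl * G * sqrt 2
                    then \<sigma>tr - dl *\<^sub>R ((G * sqrt 2) *\<^sub>R ((1 / rho \<sigma>tr) *\<^sub>R dev \<sigma>tr) + (K * \<eta>b) *\<^sub>R Id3)
                    else (pr \<sigma>tr - dl * K * \<eta>b) *\<^sub>R Id3)
          in sym3 \<sigma> \<and>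
             (\<exists>n\<in>subdiff_rho \<sigma>. \<sigma> = \<sigma>tr - dl *\<^sub>R ((G * sqrt 2) *\<^sub>R n + (K * \<eta>b) *\<^sub>R Id3)) \<and>
             ep = eptr + dl * \<xi> \<and> fyield \<eta> \<xi> c0 \<sigma> (H ep) = 0))"
  proof (intro conjI allI impI)
  fix \<sigma> ep dl
  assume A: "dl \<ge> 0 \<and> sym3 \<sigma> \<and>
        (\<exists>n\<in>subdiff_rho \<sigma>. \<sigma> = \<sigma>tr - dl *\<^sub>R ((G * sqrt 2) *\<^sub>R n + (K * \<eta>b) *\<^sub>R Id3)) \<and>
        ep = eptr + dl * \<xi> \<and> fyield \<eta> \<xi> c0 \<sigma> (H ep) = 0"
  then obtain n where n: "n \<in> subdiff_rho \<sigma>" and s: "\<sigma> = \<sigma>tr - dl *\<^sub>R ((G * sqrt 2) *\<^sub>R n + (K * \<eta>b) *\<^sub>R Id3)"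
    and dl: "dl \<ge> 0" by blast
  define c where "c = dl * G * sqrt 2"
  have c0': "c \<ge> 0" using dl assms(2) by (simp add: c_def)
  have prn: "pr n = 0"
  proof (cases "rho \<sigma> > 0")
    case True then show ?thesis using n by (simp add: subdiff_rho_def pr_lin pr_dev)
  next
    case False then show ?thesis using n by (simp add: subdiff_rho_def pr_def)
  qed
  show prs: "pr \<sigma> = pr \<sigma>tr - dl * K * \<eta>b" by (simp add: s pr_lin prn algebra_simps)
  have devs: "dev \<sigma>tr = dev \<sigma> + c *\<^sub>R n"
    by (simp add: s dev_lin dev_tr0[OF prn] c_def algebra_simps)
  show rhos: "rho \<sigma> = pos_part (rho \<sigma>tr - dl * G * sqrt 2)"
  proof (cases "rho \<sigma> > 0")
    case True
    then have nn: "n = (1 / rho \<sigma>) *\<^sub>R dev \<sigma>" using n by (simp add: subdiff_rho_def)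
    have pos: "1 + c / rho \<sigma> > 0" using True c0' by (simp add: add_pos_nonneg)
    have "dev \<sigma>tr = (1 + c / rho \<sigma>) *\<^sub>R dev \<sigma>"
      unfolding devs nn scaleR_scaleR scaleR_add_left by simp
    then have "norm (dev \<sigma>tr) = (1 + c / rho \<sigma>) * norm (dev \<sigma>)"
      using pos by simp
    then have "rho \<sigma>tr = (1 + c / rho \<sigma>) * rho \<sigma>" unfolding rho_def fnorm_norm .
    also have "\<dots> = rho \<sigma> + c" using True unfolding distrib_right by simp
    finally show ?thesis using c0' True by (simp add: pos_part_def c_def)
  next
    case False
    then have r0: "rho \<sigma> = 0" using rho_nn[of \<sigma>] by simp
    then have "dev \<sigma> = 0" by (simp add: rho_def fnorm_norm)
    then have "rho \<sigma>tr = c * norm n" using c0' by (simp add: devs rho_def fnorm_norm)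
    moreover have "norm n \<le> 1" using n r0 by (simp add: subdiff_rho_def fnorm_norm)
    ultimately have "rho \<sigma>tr \<le> c" using c0' by (metis mult_left_le mult.commute)
    then show ?thesis using r0 by (simp add: pos_part_def c_def)
  qed
  show "ep = eptr + dl * \<xi>" using A by blast
  show "fhat \<eta> \<xi> c0 (pr \<sigma>) (rho \<sigma>) (H ep) = 0" using A unfolding fyield_def by blast
next
  fix p r ep dl
  assume A: "dl \<ge> 0 \<and> p = pr \<sigma>tr - dl * K * \<eta>b \<and>
        r = pos_part (rho \<sigma>tr - dl * G * sqrt 2) \<and>
        ep = eptr + dl * \<xi> \<and> fhat \<eta> \<xi> c0 p r (H ep) = 0"
  then have dl: "dl \<ge> 0" and p: "p = pr \<sigma>tr - dl * K * \<eta>b" and r: "r = pos_part (rho \<sigma>tr - dl * G * sqrt 2)"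
    and ep: "ep = eptr + dl * \<xi>" and f: "fhat \<eta> \<xi> c0 p r (H ep) = 0" by auto
  define c where "c = dl * G * sqrt 2"
  have c0': "c \<ge> 0" using dl assms(2) by (simp add: c_def)
  have symd: "sym3 (dev \<sigma>tr)" using assms(11) by (rule sym_dev)
  show "let \<sigma> = (if rho \<sigma>tr > dl * G * sqrt 2
                    then \<sigma>tr - dl *\<^sub>R ((G * sqrt 2) *\<^sub>R ((1 / rho \<sigma>tr) *\<^sub>R dev \<sigma>tr) + (K * \<eta>b) *\<^sub>R Id3)
                    else (pr \<sigma>tr - dl * K * \<eta>b) *\<^sub>R Id3)
          in sym3 \<sigma> \<and>
             (\<exists>n\<in>subdiff_rho \<sigma>. \<sigma> = \<sigma>tr - dl *\<^sub>R ((G * sqrt 2) *\<^sub>R n + (K * \<eta>b) *\<^sub>R Id3)) \<and>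
             ep = eptr + dl * \<xi> \<and> fyield \<eta> \<xi> c0 \<sigma> (H ep) = 0"
  proof (cases "rho \<sigma>tr > c")
    case True
    define ntr where "ntr = (1 / rho \<sigma>tr) *\<^sub>R dev \<sigma>tr"
    define \<sigma> where "\<sigma> = \<sigma>tr - dl *\<^sub>R ((G * sqrt 2) *\<^sub>R ntr + (K * \<eta>b) *\<^sub>R Id3)"
    have rpos: "rho \<sigma>tr > 0" using True c0' by linarith
    have prn: "pr ntr = 0" by (simp add: ntr_def pr_lin pr_dev)
    have prs: "pr \<sigma> = p" by (simp add: \<sigma>_def p pr_lin prn algebra_simps)
    have devs: "dev \<sigma> = (1 - c / rho \<sigma>tr) *\<^sub>R dev \<sigma>tr"
      by (simp add: \<sigma>_def dev_lin dev_dev c_def ntr_def algebra_simps)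
    have "rho \<sigma> = \<bar>1 - c / rho \<sigma>tr\<bar> * rho \<sigma>tr" by (simp add: devs rho_def fnorm_norm)
    also have "\<dots> = rho \<sigma>tr - c" using True rpos by (simp add: field_simps)
    finally have rhos: "rho \<sigma> = rho \<sigma>tr - c" .
    have rr: "r = rho \<sigma> " using rhos True by (simp add: r pos_part_def c_def)
    have "(1 / rho \<sigma>) *\<^sub>R dev \<sigma> = ntr" using True rpos
      by (simp add: devs rhos ntr_def field_simps)
    then have "ntr \<in> subdiff_rho \<sigma>" using rhos True by (simp add: subdiff_rho_def)
    moreover have "sym3 \<sigma>" unfolding \<sigma>_def ntr_def by (intro sym_ops assms(11) symd)
    moreover have "fyield \<eta> \<xi> c0 \<sigma> (H ep) = 0" using f by (simp add: fyield_def prs rr)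
    moreover have eqIF: "(if rho \<sigma>tr > dl * G * sqrt 2
                    then \<sigma>tr - dl *\<^sub>R ((G * sqrt 2) *\<^sub>R ((1 / rho \<sigma>tr) *\<^sub>R dev \<sigma>tr) + (K * \<eta>b) *\<^sub>R Id3)
                    else (pr \<sigma>tr - dl * K * \<eta>b) *\<^sub>R Id3) = \<sigma>"
      using True by (simp add: \<sigma>_def ntr_def c_def)
    ultimately show ?thesis using ep \<sigma>_def unfolding Let_def eqIF by blast
  next
    case False
    define \<sigma> where "\<sigma> = p *\<^sub>R Id3"
    define n where "n = (1 / c) *\<^sub>R dev \<sigma>tr"
    have prn: "pr n = 0" by (simp add: n_def pr_lin pr_dev)
    have devs: "dev \<sigma> = 0" by (simp add: \<sigma>_def dev_lin)
    have rhos: "rho \<sigma> = 0" by (simp add: devs rho_def fnorm_norm)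
    have rr: "r = 0" using False by (simp add: r pos_part_def c_def)
    have nrm: "norm n \<le> 1"
    proof (cases "c = 0")
      case True then show ?thesis by (simp add: n_def)
    next
      case False
      then have "norm n = rho \<sigma>tr / c" using c0' by (simp add: n_def rho_def fnorm_norm)
      then show ?thesis using False c0' \<open>\<not> c < rho \<sigma>tr\<close> by (simp add: divide_le_eq_1)
    qed
    have "sym3 n" unfolding n_def by (intro sym_ops symd)
    then have nin: "n \<in> subdiff_rho \<sigma>" using nrm prn rhos by (simp add: subdiff_rho_def fnorm_norm pr_def)
    have decomp: "\<sigma>tr = pr \<sigma>tr *\<^sub>R Id3 + dev \<sigma>tr" by (simp add: dev_def)
    have dtr: "dev \<sigma>tr = c *\<^sub>R n"
    proof (cases "c = 0")
      case True
      then have "rho \<sigma>tr = 0" using False rho_nn[of \<sigma>tr] by simp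
      then have "dev \<sigma>tr = 0" by (simp add: rho_def fnorm_norm)
      then show ?thesis by (simp add: n_def)
    next
      case False then show ?thesis by (simp add: n_def)
    qed
    have eq: "\<sigma> = \<sigma>tr - dl *\<^sub>R ((G * sqrt 2) *\<^sub>R n + (K * \<eta>b) *\<^sub>R Id3)"
      apply (subst decomp) by (simp add: \<sigma>_def p dtr c_def algebra_simps)
    have "sym3 \<sigma>" unfolding \<sigma>_def by (intro sym_ops)
    moreover have "fyield \<eta> \<xi> c0 \<sigma> (H ep) = 0" using f unfolding fyield_def rhos rr[symmetric] by (simp add: \<sigma>_def pr_lin)
    moreover have eqIF: "(if rho \<sigma>tr > dl * G * sqrt 2
                    then \<sigma>tr - dl *\<^sub>R ((G * sqrt 2) *\<^sub>R ((1 / rho \<sigma>tr) *\<^sub>R dev \<sigma>tr) + (K * \<eta>b) *\<^sub>R Id3)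
                    else (pr \<sigma>tr - dl * K * \<eta>b) *\<^sub>R Id3) = \<sigma>"
      using False by (simp add: \<sigma>_def p c_def)
    ultimately show ?thesis using nin eq ep unfolding Let_def eqIF by blast
  qed
qed

end
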